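(* Let $\nu>0$ be real. Then every zero $a\in\mathbb C\setminus\{0\}$ of the function $x\mapsto\big(D_qJ_\nu(\cdot;q^2)\big)(x)$ is real and simple (i.e. the ordinary derivative of $x\mapsto (D_qJ_\nu(\cdot;q^2))(x)$ does not vanish at $a$).
   Context: Fix $0<q<1$. For $a\in\mathbb C$ put $(a;q)_0=1$, $(a;q)_k=\prod_{i=0}^{k-1}(1-aq^i)$, $(a;q)_\infty=\prod_{i\ge0}(1-aq^i)$. For $\nu\in\mathbb C$ and $x\in\mathbb C\setminus\{0\}$ the Hahn–Exton $q$-Bessel function is $$J_\nu(x;q^2)=\frac{x^\nu}{(q^2;q^2)_\infty}\sum_{k=0}^\infty\frac{(-1)^kq^{k(k+1)}(q^{2\nu+2k+2};q^2)_\infty}{(q^2;q^2)_k}\,x^{2k},$$ with $x^\nu=\exp(\nu\operatorname{Log}x)$ (principal branch). The $q$-derivative is $(D_qf)(x)=\frac{f(x)-f(qx)}{(1-q)x}$ for $x\ne0$; thus $(D_qJ_\nu(\cdot;q^2))(x)=\frac{J_\nu(x;q^2)-J_\nu(qx;q^2)}{(1-q)x}$. *)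

theory Defs
  imports "HOL-Analysis.Analysis"
begin

definition qpoch :: "complex \<Rightarrow> real \<Rightarrow> nat \<Rightarrow> complex" where
  "qpoch a p k = (\<Prod>i<k. 1 - a * of_real p ^ i)"

definition qpoch_inf :: "complex \<Rightarrow> real \<Rightarrow> complex" where
  "qpoch_inf a p = lim (\<lambda>k. qpoch a p k)"

text \<open>Hahn--Exton q-Bessel function J_nu(x;q^2), with x^nu = exp(nu Log x) (principal branch)
  and q^(2nu+2k+2) = exp((2nu+2k+2) ln q).\<close>
definition HE_J :: "real \<Rightarrow> complex \<Rightarrow> complex \<Rightarrow> complex" where
  "HE_J q \<nu> x =
     exp (\<nu> * Ln x) / qpoch_inf (of_real (q^2)) (q^2) *
     (\<Sum>k. (-1)^k * of_real (q ^ (k*(k+1)))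
            * qpoch_inf (exp ((2*\<nu> + 2 * of_nat k + 2) * of_real (ln q))) (q^2)
            / qpoch (of_real (q^2)) (q^2) k * x ^ (2*k))"

definition DqJ :: "real \<Rightarrow> complex \<Rightarrow> complex \<Rightarrow> complex" where
  "DqJ q \<nu> x = (HE_J q \<nu> x - HE_J q \<nu> (of_real q * x)) / ((1 - of_real q) * x)"

end

theory Submission
  imports Defs
begin

definition Pr :: "real \<Rightarrow> real \<Rightarrow> real" where
  "Pr c p = lim (\<lambda>n. \<Prod>i<n. 1 - c * p ^ i)"

lemma Pr_conv:
  assumes "0 < p" "p < 1"
  shows "(\<lambda>n. \<Prod>i<n. 1 - c * p ^ i) \<longlonglongrightarrow> Pr c p"
    and "(\<And>i. 1 - c * p ^ i \<noteq> 0) \<Longrightarrow> Pr c p \<noteq> 0"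
proof -
  have s: "summable (\<lambda>i. norm ((1 - c * p ^ i) - 1))"
    using assms by (simp add: abs_mult power_abs summable_geometric)
  have cp: "convergent_prod (\<lambda>i. 1 - c * p ^ i)"
    by (rule abs_convergent_prod_imp_convergent_prod[OF summable_imp_abs_convergent_prod[OF s]])
  have L: "(\<lambda>n. \<Prod>i<n. 1 - c * p ^ i) \<longlonglongrightarrow> prodinf (\<lambda>i. 1 - c * p ^ i)"
    using convergent_prod_LIMSEQ[OF cp] LIMSEQ_lessThan_iff_atMost[of "\<lambda>A. \<Prod>i\<in>A. 1 - c * p ^ i"]
    by simp
  hence e: "Pr c p = prodinf (\<lambda>i. 1 - c * p ^ i)"
    unfolding Pr_def by (rule limI)
  show "(\<lambda>n. \<Prod>i<n. 1 - c * p ^ i) \<longlonglongrightarrow> Pr c p" using L e by simp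
  show "(\<And>i. 1 - c * p ^ i \<noteq> 0) \<Longrightarrow> Pr c p \<noteq> 0"
    using prodinf_nonzero[OF cp] e by metis
qed

lemma Pr_shift:
  assumes "0 < p" "p < 1"
  shows "Pr c p = (1 - c) * Pr (c * p) p"
proof -
  have "(\<lambda>n. (1 - c) * (\<Prod>i<n. 1 - (c*p) * p ^ i)) \<longlonglongrightarrow> (1 - c) * Pr (c*p) p"
    by (intro tendsto_mult tendsto_const Pr_conv assms)
  moreover have "(\<lambda>n. (1 - c) * (\<Prod>i<n. 1 - (c*p) * p ^ i)) = (\<lambda>n. \<Prod>i<Suc n. 1 - c * p ^ i)"
    by (rule ext, subst prod.lessThan_Suc_shift) (simp add: mult.assoc)
  ultimately have "(\<lambda>n. \<Prod>i<Suc n. 1 - c * p ^ i) \<longlonglongrightarrow> (1 - c) * Pr (c*p) p" by simp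
  hence "(\<lambda>n. \<Prod>i<n. 1 - c * p ^ i) \<longlonglongrightarrow> (1 - c) * Pr (c*p) p"
    by (rule LIMSEQ_imp_Suc)
  thus ?thesis using Pr_conv(1)[OF assms, of c] LIMSEQ_unique by blast
qed

lemma qpoch_of_real: "qpoch (of_real c) p k = of_real (\<Prod>i<k. 1 - c * p ^ i)"
  unfolding qpoch_def by simp

lemma qpoch_inf_of_real:
  assumes "0 < p" "p < 1"
  shows "qpoch_inf (of_real c) p = of_real (Pr c p)"
proof -
  have "(\<lambda>n. qpoch (of_real c) p n) \<longlonglongrightarrow> of_real (Pr c p)"
    unfolding qpoch_of_real by (intro tendsto_of_real Pr_conv assms)
  thus ?thesis unfolding qpoch_inf_def by (rule limI)
qed


definition cr :: "real \<Rightarrow> real \<Rightarrow> nat \<Rightarrow> real" where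
  "cr q \<nu> k = (-1)^k * q^(k*(k+1)) * Pr (q powr (2*\<nu>) * (q^2)^(k+1)) (q^2)
      / (\<Prod>i<k. 1 - q^2 * (q^2)^i)"

lemma exp_term:
  assumes "0 < q"
  shows "exp ((2 * complex_of_real \<nu> + 2 * of_nat k + 2) * complex_of_real (ln q))
       = complex_of_real (q powr (2*\<nu>) * (q^2)^(k+1))"
proof -
  have "(2 * complex_of_real \<nu> + 2 * of_nat k + 2) * complex_of_real (ln q)
        = complex_of_real ((2*\<nu>) * ln q + real (2*k+2) * ln q)"
    by (simp add: algebra_simps)
  also have "exp \<dots> = complex_of_real (exp ((2*\<nu>) * ln q) * exp (real (2*k+2) * ln q))"
    by (metis exp_add exp_of_real)
  also have "exp (real (2*k+2) * ln q) = q ^ (2*k+2)"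
    using assms by (metis exp_ln exp_of_nat_mult)
  also have "exp ((2*\<nu>) * ln q) = q powr (2*\<nu>)"
    using assms by (simp add: powr_def)
  also have "(q::real) ^ (2*k+2) = (q^2)^(k+1)"
    by (simp only: power_mult[symmetric]) (simp add: algebra_simps)
  finally show ?thesis .
qed

lemma HE_J_rep:
  assumes "0 < q" "q < 1"
  shows "HE_J q (of_real \<nu>) x = exp (of_real \<nu> * Ln x) / of_real (Pr (q^2) (q^2)) *
          (\<Sum>k. of_real (cr q \<nu> k) * (x^2)^k)"
proof -
  have p: "0 < q^2" "q^2 < 1" using assms by (auto simp: power_less_one_iff)
  have "(-1)^k * of_real (q ^ (k*(k+1)))
            * qpoch_inf (exp ((2 * of_real \<nu> + 2 * of_nat k + 2) * of_real (ln q))) (q^2)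
            / qpoch (of_real (q^2)) (q^2) k * x ^ (2*k) = of_real (cr q \<nu> k) * (x^2)^k" for k
    unfolding exp_term[OF assms(1)] qpoch_inf_of_real[OF p] qpoch_of_real cr_def
    by (simp add: power_mult)
  then show ?thesis unfolding HE_J_def qpoch_inf_of_real[OF p] by simp
qed

lemma cr_rec:
  assumes "0 < q" "q < 1"
  shows "cr q \<nu> (Suc k) * (1 - (q^2)^(Suc k)) * (1 - q powr (2*\<nu>) * (q^2)^(Suc k))
         = - ((q^2)^(Suc k) * cr q \<nu> k)"
proof -
  have p: "0 < q^2" "q^2 < 1" using assms by (auto simp: power_less_one_iff)
  define b where "b = q powr (2*\<nu>)"
  define Q where "Q = (\<Prod>i<k. 1 - q^2 * (q^2)^i)"
  have Qs: "(\<Prod>i<Suc k. 1 - q^2 * (q^2)^i) = Q * (1 - (q^2)^(Suc k))"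
    unfolding Q_def by simp
  have fnz: "\<forall>i. 1 - q^2 * (q^2)^i \<noteq> 0"
    using power_Suc_less_one[OF p] by (metis less_irrefl power_Suc right_minus_eq)
  have Qnz: "Q \<noteq> 0" unfolding Q_def using fnz by simp
  have n1: "1 - (q^2)^(Suc k) \<noteq> 0" using power_Suc_less_one[OF p, of k] by simp
  have Ps: "Pr (b * (q^2)^(k+1)) (q^2) = (1 - b*(q^2)^(Suc k)) * Pr (b * (q^2)^(Suc k+1)) (q^2)"
  proof -
    have "b * (q^2)^(k+1) * q^2 = b * (q^2)^(Suc k+1)"
      by (metis power_Suc2 add_Suc mult.assoc)
    thus ?thesis using Pr_shift[OF p, of "b * (q^2)^(k+1)"] by (metis Suc_eq_plus1)
  qed
  define P1 where "P1 = Pr (b * (q^2)^(k+1)) (q^2)"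
  define P2 where "P2 = Pr (b * (q^2)^(Suc k+1)) (q^2)"
  have c1: "cr q \<nu> k = (-1)^k * q^(k*(k+1)) * P1 / Q"
    unfolding cr_def P1_def Q_def b_def ..
  have c2: "cr q \<nu> (Suc k) = (-1)^(Suc k) * q^(Suc k*(Suc k+1)) * P2 / (Q * (1 - (q^2)^(Suc k)))"
    unfolding cr_def P2_def Qs[symmetric] b_def ..
  have e: "q^(Suc k*(Suc k+1)) = q^(k*(k+1)) * (q^2)^(Suc k)"
  proof -
    have "Suc k*(Suc k+1) = k*(k+1) + 2*(Suc k)" by (simp add: algebra_simps)
    thus ?thesis by (simp only: power_add power_mult)
  qed
  have "cr q \<nu> (Suc k) * (1 - (q^2)^(Suc k)) * (1 - b * (q^2)^(Suc k))
      = (-1)^(Suc k) * (q^(k*(k+1)) * (q^2)^(Suc k)) * ((1 - b * (q^2)^(Suc k)) * P2) / Q"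
    unfolding c2 e using n1 Qnz by (simp add: field_simps)
  also have "\<dots> = - ((q^2)^(Suc k) * cr q \<nu> k)"
    unfolding c1 Ps[folded P1_def P2_def, symmetric] by (simp add: field_simps)
  finally show ?thesis unfolding b_def .
qed


lemma params:
  fixes q \<nu> :: real
  assumes "0 < q" "q < 1" "0 < \<nu>"
  shows "0 < q^2" "q^2 < 1" "0 < q powr (2*\<nu>)" "q powr (2*\<nu>) < 1"
    "q powr \<nu> * q powr \<nu> = q powr (2*\<nu>)" "0 < q powr \<nu>" "q powr \<nu> < 1"
proof -
  show "0 < q^2" using assms(1) by (rule zero_less_power)
  show "q^2 < 1" using assms by (simp add: power_less_one_iff)
  show "0 < q powr (2*\<nu>)" using assms by simp
  show "q powr (2*\<nu>) < 1" using powr_less_mono2[of "2*\<nu>" q 1] assms by simp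
  show "q powr \<nu> * q powr \<nu> = q powr (2*\<nu>)" by (simp add: powr_add[symmetric])
  show "0 < q powr \<nu>" using assms by simp
  show "q powr \<nu> < 1" using powr_less_mono2[of "\<nu>" q 1] assms by simp
qed

lemma cr_bound:
  assumes "0 < q" "q < 1" "0 < \<nu>"
  shows "\<bar>cr q \<nu> (Suc k)\<bar> \<le> (q^2)^(Suc k) / ((1 - q^2) * (1 - q powr (2*\<nu>))) * \<bar>cr q \<nu> k\<bar>"
proof -
  note P = params[OF assms]
  define p where "p = q^2"
  define b where "b = q powr (2*\<nu>)"
  have p: "0 < p" "p < 1" and b: "0 < b" "b < 1" using P unfolding p_def b_def by auto
  have r: "cr q \<nu> (Suc k) * ((1 - p^(Suc k)) * (1 - b * p^(Suc k))) = - (p^(Suc k) * cr q \<nu> k)"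
    using cr_rec[OF assms(1,2), of \<nu> k] unfolding p_def b_def by (simp add: mult.assoc)
  have pk: "p^k \<le> 1" using p by (intro power_le_one) auto
  have ps: "p^(Suc k) \<le> p" "0 < p^Suc k"
    using mult_left_mono[OF pk, of p] p by auto
  have d1: "1 - p \<le> 1 - p^(Suc k)" using ps by simp
  have "p^Suc k \<le> 1" using ps p by linarith
  hence "b * p^Suc k \<le> b" using b by (intro mult_left_le) auto
  hence d2: "1 - b \<le> 1 - b * p^(Suc k)" by simp
  have dpos: "0 < (1 - p) * (1 - b)" using p b by simp
  have dle: "(1 - p) * (1 - b) \<le> (1 - p^(Suc k)) * (1 - b * p^(Suc k))"
    using d1 d2 p b by (intro mult_mono) auto
  have "\<bar>cr q \<nu> (Suc k)\<bar> * ((1 - p) * (1 - b)) \<le> \<bar>cr q \<nu> (Suc k)\<bar> * ((1 - p^(Suc k)) * (1 - b * p^(Suc k)))"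
    using dle by (intro mult_left_mono) auto
  also have "\<dots> = \<bar>cr q \<nu> (Suc k) * ((1 - p^(Suc k)) * (1 - b * p^(Suc k)))\<bar>"
  proof -
    have nn1: "0 \<le> 1 - p^Suc k" using d1 p by linarith
    have nn2: "0 \<le> 1 - b * p^Suc k" using d2 b by linarith
    show ?thesis by (simp only: abs_mult abs_of_nonneg[OF nn1] abs_of_nonneg[OF nn2])
  qed
  also have "\<dots> = \<bar>- (p^(Suc k) * cr q \<nu> k)\<bar>" by (simp only: r)
  also have "\<dots> = p^(Suc k) * \<bar>cr q \<nu> k\<bar>" using ps by (simp add: abs_mult)
  finally have "\<bar>cr q \<nu> (Suc k)\<bar> * ((1 - p) * (1 - b)) \<le> p^(Suc k) * \<bar>cr q \<nu> k\<bar>" .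
  thus ?thesis using dpos unfolding p_def[symmetric] b_def[symmetric]
    by (simp add: field_simps)
qed

lemma cr_summable:
  assumes "0 < q" "q < 1" "0 < \<nu>"
  shows "summable (\<lambda>k. complex_of_real (cr q \<nu> k) * z^k)"
proof -
  note P = params[OF assms]
  define D where "D = (1 - q^2) * (1 - q powr (2*\<nu>))"
  have D: "0 < D" using P unfolding D_def by simp
  have "(\<lambda>n. (q^2)^n) \<longlonglongrightarrow> 0" using P by (intro LIMSEQ_power_zero) auto
  hence "eventually (\<lambda>n. (q^2)^n < D / (2 * (norm z + 1))) sequentially"
  proof (rule order_tendstoD)
    show "0 < D / (2 * (norm z + 1))" using D
      by (intro divide_pos_pos mult_pos_pos) (auto intro: add_nonneg_pos)
  qed
  then obtain N where N: "\<And>n. n \<ge> N \<Longrightarrow> (q^2)^n < D / (2 * (norm z + 1))"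
    by (auto simp: eventually_sequentially)
  show ?thesis
  proof (rule summable_ratio_test[of "1/2" N])
    fix n assume n: "n \<ge> N"
    have pn: "(q^2)^(Suc n) \<le> (q^2)^n" using P by (simp add: power_le_one less_imp_le)
    have "(q^2)^(Suc n) * norm z / D \<le> (D / (2 * (norm z + 1))) * norm z / D"
      using N[OF n] pn D by (intro divide_right_mono mult_right_mono) auto
    also have "\<dots> = norm z / (2 * (norm z + 1))" using D by simp
    also have "\<dots> \<le> 1/2"
    proof -
      have "0 < 2 * (norm z + 1)" by (simp add: add_nonneg_pos)
      thus ?thesis by (simp add: divide_le_eq)
    qed
    finally have k: "(q^2)^(Suc n) * norm z / D \<le> 1/2" .
    have "norm (complex_of_real (cr q \<nu> (Suc n)) * z^(Suc n))
          = \<bar>cr q \<nu> (Suc n)\<bar> * (norm z * norm z ^ n)"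
      by (simp add: norm_mult norm_power)
    also have "\<dots> \<le> ((q^2)^(Suc n) / D * \<bar>cr q \<nu> n\<bar>) * (norm z * norm z ^ n)"
      using cr_bound[OF assms, of n] unfolding D_def[symmetric] by (intro mult_right_mono) auto
    also have "\<dots> = ((q^2)^(Suc n) * norm z / D) * (\<bar>cr q \<nu> n\<bar> * norm z ^ n)" by simp
    also have "\<dots> \<le> 1/2 * (\<bar>cr q \<nu> n\<bar> * norm z ^ n)"
      using k by (intro mult_right_mono) auto
    also have "\<bar>cr q \<nu> n\<bar> * norm z ^ n = norm (complex_of_real (cr q \<nu> n) * z^n)"
      by (simp add: norm_mult norm_power)
    finally show "norm (complex_of_real (cr q \<nu> (Suc n)) * z^(Suc n)) \<le> 1/2 * norm (complex_of_real (cr q \<nu> n) * z^n)" .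
  qed simp
qed


definition phi :: "real \<Rightarrow> real \<Rightarrow> complex \<Rightarrow> complex" where
  "phi q \<nu> z = (\<Sum>k. complex_of_real (cr q \<nu> k) * z^k)"

definition dphi :: "real \<Rightarrow> real \<Rightarrow> complex \<Rightarrow> complex" where
  "dphi q \<nu> z = (\<Sum>k. diffs (\<lambda>k. complex_of_real (cr q \<nu> k)) k * z^k)"

lemma phi_deriv:
  assumes "0 < q" "q < 1" "0 < \<nu>"
  shows "(phi q \<nu> has_field_derivative dphi q \<nu> z) (at z)"
  unfolding phi_def[abs_def] dphi_def
  by (rule termdiffs_strong_converges_everywhere) (rule cr_summable[OF assms(1-3)])

lemma phi_cont:
  assumes "0 < q" "q < 1" "0 < \<nu>"
  shows "isCont (phi q \<nu>) z"
  unfolding phi_def[abs_def]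
  by (rule isCont_powser_converges_everywhere) (rule cr_summable[OF assms(1-3)])

lemma dphi_cont:
  assumes "0 < q" "q < 1" "0 < \<nu>"
  shows "isCont (dphi q \<nu>) z"
  unfolding dphi_def[abs_def]
  by (rule isCont_powser_converges_everywhere, rule termdiff_converges_all) (rule cr_summable[OF assms(1-3)])

lemma phi_0:
  assumes "0 < q" "q < 1" "0 < \<nu>"
  shows "phi q \<nu> 0 \<noteq> 0"
proof -
  note P = params[OF assms(1-3)]
  have "phi q \<nu> 0 = complex_of_real (cr q \<nu> 0)"
    unfolding phi_def using powser_zero[of "\<lambda>k. complex_of_real (cr q \<nu> k)"] by simp
  moreover have "cr q \<nu> 0 = Pr (q powr (2*\<nu>) * q^2) (q^2)" unfolding cr_def by simp
  moreover have "Pr (q powr (2*\<nu>) * q^2) (q^2) \<noteq> 0"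
  proof (rule Pr_conv(2)[OF P(1,2)])
    fix i
    have h1: "(q^2)^i \<le> 1" by (rule power_le_one) (use P in auto)
    have h2: "q powr (2*\<nu>) * q^2 < 1 * 1" by (rule mult_strict_mono) (use P in auto)
    have "q powr (2*\<nu>) * q^2 * (q^2)^i \<le> q powr (2*\<nu>) * q^2"
      using h1 P by (intro mult_left_le) auto
    hence "q powr (2*\<nu>) * q^2 * (q^2)^i < 1" using h2 by simp
    thus "1 - q powr (2*\<nu>) * q^2 * (q^2)^i \<noteq> 0" by auto
  qed
  ultimately show ?thesis by simp
qed

lemma phi_real:
  assumes "0 < q" "q < 1" "0 < \<nu>"
  shows "phi q \<nu> (complex_of_real x) = complex_of_real (\<Sum>k. cr q \<nu> k * x^k)"
proof -
  have "summable (\<lambda>k. complex_of_real (cr q \<nu> k * x^k))"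
    using cr_summable[OF assms, of "complex_of_real x"] by simp
  hence s: "summable (\<lambda>k. cr q \<nu> k * x^k)" by (simp only: summable_of_real_iff)
  have "(\<lambda>k. complex_of_real (cr q \<nu> k * x^k)) sums complex_of_real (\<Sum>k. cr q \<nu> k * x^k)"
    using summable_sums[OF s] by (simp only: sums_of_real_iff)
  thus ?thesis unfolding phi_def by (simp add: sums_iff)
qed

lemma phi_funeq:
  assumes "0 < q" "q < 1" "0 < \<nu>"
  defines "P \<equiv> complex_of_real (q^2)" and "B \<equiv> complex_of_real (q powr (2*\<nu>))"
  shows "phi q \<nu> z - (1 + B - P * z) * phi q \<nu> (P * z) + B * phi q \<nu> (P * P * z) = 0"
proof -
  define a where "a k = complex_of_real (cr q \<nu> k) * z^k" for k
  have S: "(\<lambda>k. complex_of_real (cr q \<nu> k) * w^k) sums phi q \<nu> w" for w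
    unfolding phi_def by (rule summable_sums[OF cr_summable[OF assms(1-3)]])
  have S0: "(\<lambda>k. a k) sums phi q \<nu> z" using S[of z] unfolding a_def .
  have S1: "(\<lambda>k. a k * P^k) sums phi q \<nu> (P * z)"
    using S[of "P*z"] unfolding a_def by (simp add: power_mult_distrib mult_ac)
  have S2: "(\<lambda>k. a k * (P^k * P^k)) sums phi q \<nu> (P * P * z)"
    using S[of "P*P*z"] unfolding a_def by (simp add: power_mult_distrib mult_ac)
  define g where "g k = a k * ((1 - P^k) * (1 - B * P^k))" for k
  have "(\<lambda>k. a k - (1 + B) * (a k * P^k) + B * (a k * (P^k * P^k))) sums
        (phi q \<nu> z - (1 + B) * phi q \<nu> (P * z) + B * phi q \<nu> (P * P * z))"
    by (intro sums_add sums_diff sums_mult S0 S1 S2)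
  moreover have "(\<lambda>k. a k - (1 + B) * (a k * P^k) + B * (a k * (P^k * P^k))) = g"
    unfolding g_def by (rule ext) (simp add: algebra_simps)
  ultimately have G1: "g sums (phi q \<nu> z - (1 + B) * phi q \<nu> (P * z) + B * phi q \<nu> (P * P * z))"
    by simp
  have gS: "g (Suc k) = - (P * z) * (a k * P^k)" for k
  proof -
    have r: "cr q \<nu> (Suc k) * (1 - (q^2)^(Suc k)) * (1 - q powr (2*\<nu>) * (q^2)^(Suc k))
         = - ((q^2)^(Suc k) * cr q \<nu> k)" by (rule cr_rec[OF assms(1,2)])
    have r': "complex_of_real (cr q \<nu> (Suc k)) * ((1 - P^(Suc k)) * (1 - B * P^(Suc k)))
         = - (P^(Suc k) * complex_of_real (cr q \<nu> k))"
      using arg_cong[OF r, of complex_of_real] unfolding P_def B_def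
      by (simp add: mult.assoc)
    have "g (Suc k) = (complex_of_real (cr q \<nu> (Suc k)) * ((1 - P^(Suc k)) * (1 - B * P^(Suc k)))) * z^Suc k"
      unfolding g_def a_def by (simp add: mult_ac)
    also have "\<dots> = - (P^(Suc k) * complex_of_real (cr q \<nu> k)) * z^Suc k" by (simp only: r')
    also have "\<dots> = - (P * z) * (a k * P^k)" unfolding a_def by (simp add: mult_ac)
    finally show ?thesis .
  qed
  have "(\<lambda>k. g (Suc k)) sums (- (P * z) * phi q \<nu> (P * z))"
    unfolding gS by (intro sums_mult S1)
  hence G2: "g sums (- (P * z) * phi q \<nu> (P * z) + g 0)" by (simp only: sums_Suc_iff)
  have "g 0 = 0" unfolding g_def by simp
  hence "phi q \<nu> z - (1 + B) * phi q \<nu> (P * z) + B * phi q \<nu> (P * P * z) = - (P * z) * phi q \<nu> (P * z)"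
    using sums_unique2[OF G1 G2] by simp
  thus ?thesis by (simp add: algebra_simps)
qed

lemma dphi_funeq:
  assumes "0 < q" "q < 1" "0 < \<nu>"
  defines "P \<equiv> complex_of_real (q^2)" and "B \<equiv> complex_of_real (q powr (2*\<nu>))"
  shows "dphi q \<nu> z - (1 + B - P * z) * P * dphi q \<nu> (P * z) + P * phi q \<nu> (P * z)
          + B * (P * P) * dphi q \<nu> (P * P * z) = 0"
proof -
  define F where "F w = phi q \<nu> w - (1 + B - P * w) * phi q \<nu> (P * w) + B * phi q \<nu> (P * P * w)" for w
  have F0: "F = (\<lambda>_. 0)" unfolding F_def P_def B_def by (rule ext) (rule phi_funeq[OF assms(1-3)])
  have D1: "((\<lambda>w. phi q \<nu> (P * w)) has_field_derivative dphi q \<nu> (P * z) * P) (at z)"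
    by (rule DERIV_chain2[where f="phi q \<nu>" and g="\<lambda>w. P * w", OF phi_deriv[OF assms(1-3)] DERIV_cmult_Id])
  have D2: "((\<lambda>w. phi q \<nu> (P * P * w)) has_field_derivative dphi q \<nu> (P * P * z) * (P * P)) (at z)"
    by (rule DERIV_chain2[where f="phi q \<nu>" and g="\<lambda>w. P * P * w", OF phi_deriv[OF assms(1-3)] DERIV_cmult_Id])
  have d3: "((\<lambda>w. 1 + B - P * w) has_field_derivative - P) (at z)"
    by (auto intro!: derivative_eq_intros)
  have "(F has_field_derivative
     (dphi q \<nu> z - ((- P) * phi q \<nu> (P * z) + (dphi q \<nu> (P * z) * P) * (1 + B - P * z))
       + B * (dphi q \<nu> (P * P * z) * (P * P)))) (at z)"
    unfolding F_def
    by (intro DERIV_add DERIV_diff DERIV_mult DERIV_cmult phi_deriv[OF assms(1-3)] D1 D2 d3)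
  moreover have "(F has_field_derivative 0) (at z)" unfolding F0 by simp
  ultimately have "dphi q \<nu> z - ((- P) * phi q \<nu> (P * z) + (dphi q \<nu> (P * z) * P) * (1 + B - P * z))
       + B * (dphi q \<nu> (P * P * z) * (P * P)) = 0" by (rule DERIV_unique)
  thus ?thesis by (simp add: algebra_simps)
qed


lemma green:
  fixes u v :: "nat \<Rightarrow> complex" and b :: complex
  shows "(\<Sum>n<Suc N. b^n * ((u n - u (Suc n)) - b * (u (Suc n) - u (Suc (Suc n)))) * v (Suc n))
   = (u 0 - u 1) * v 1 - (\<Sum>m\<in>{1..N}. b^m * (u m - u (Suc m)) * (v m - v (Suc m)))
     - b^(Suc N) * (u (Suc N) - u (Suc (Suc N))) * v (Suc N)"
proof (induction N)
  case 0
  then show ?case by (simp add: algebra_simps)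
next
  case (Suc N)
  have "(\<Sum>n<Suc (Suc N). b^n * ((u n - u (Suc n)) - b * (u (Suc n) - u (Suc (Suc n)))) * v (Suc n))
     = (\<Sum>n<Suc N. b^n * ((u n - u (Suc n)) - b * (u (Suc n) - u (Suc (Suc n)))) * v (Suc n))
       + b^(Suc N) * ((u (Suc N) - u (Suc (Suc N))) - b * (u (Suc (Suc N)) - u (Suc (Suc (Suc N))))) * v (Suc (Suc N))"
    by simp
  also have "(\<Sum>m\<in>{1..Suc N}. b^m * (u m - u (Suc m)) * (v m - v (Suc m)))
     = (\<Sum>m\<in>{1..N}. b^m * (u m - u (Suc m)) * (v m - v (Suc m)))
       + b^(Suc N) * (u (Suc N) - u (Suc (Suc N))) * (v (Suc N) - v (Suc (Suc N)))"
    by simp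
  ultimately show ?case using Suc.IH by (simp add: algebra_simps)
qed

lemma eventually_pos_sum:
  fixes y :: "nat \<Rightarrow> complex" and b p :: real
  assumes "y \<longlonglongrightarrow> c" "c \<noteq> 0" "0 < b" "0 < p"
  shows "\<exists>n0 t0. 0 < t0 \<and> (\<forall>N\<ge>n0. t0 \<le> (\<Sum>n<Suc N. b^n * p^(Suc n) * (cmod (y (Suc n)))\<^sup>2))"
proof -
  have "eventually (\<lambda>n. y n \<noteq> 0) sequentially"
    using assms(1,2) by (rule tendsto_imp_eventually_ne)
  then obtain M where M: "\<And>n. n \<ge> M \<Longrightarrow> y n \<noteq> 0" by (auto simp: eventually_sequentially)
  define t0 where "t0 = b^M * p^(Suc M) * (cmod (y (Suc M)))\<^sup>2"
  have t0: "0 < t0" unfolding t0_def using M[of "Suc M"] assms by simp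
  have "t0 \<le> (\<Sum>n<Suc N. b^n * p^(Suc n) * (cmod (y (Suc n)))\<^sup>2)" if "N \<ge> M" for N
    unfolding t0_def
    by (rule member_le_sum[where f="\<lambda>n. b^n * p^(Suc n) * (cmod (y (Suc n)))\<^sup>2"])
       (use that assms in auto)
  thus ?thesis using t0 by blast
qed


lemma cnj_sq: "z * cnj z = (complex_of_real (cmod z))^2" "cnj z * z = (complex_of_real (cmod z))^2"
  by (metis complex_norm_square of_real_power mult.commute)+

lemma reality_abstract:
  fixes y :: "nat \<Rightarrow> complex" and b p s :: real and l :: complex
  assumes rec: "\<And>n. (y n - y (Suc n)) - of_real b * (y (Suc n) - y (Suc (Suc n)))
                     = - l * of_real (p^(Suc n)) * y (Suc n)"
    and bc: "y 0 = of_real s * y 1"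
    and b: "0 < b" "b < 1" and p: "0 < p" and s: "s \<le> 1"
    and lim: "y \<longlonglongrightarrow> c" and c: "c \<noteq> 0"
  shows "Im l = 0 \<and> 0 \<le> Re l"
proof -
  define t where "t N = (\<Sum>n<Suc N. b^n * p^(Suc n) * (cmod (y (Suc n)))\<^sup>2)" for N
  define R where "R N = (1 - s) * (cmod (y 1))\<^sup>2 + (\<Sum>m\<in>{1..N}. b^m * (cmod (y m - y (Suc m)))\<^sup>2)" for N
  define BN where "BN N = of_real b ^ (Suc N) * (y (Suc N) - y (Suc (Suc N))) * cnj (y (Suc N))" for N
  have R0: "0 \<le> R N" for N unfolding R_def using s b by (intro add_nonneg_nonneg sum_nonneg) auto
  have key: "l * of_real (t N) = of_real (R N) + BN N" for N
  proof -
    have G: "(\<Sum>n<Suc N. of_real b^n * ((y n - y (Suc n)) - of_real b * (y (Suc n) - y (Suc (Suc n)))) * cnj (y (Suc n)))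
      = (y 0 - y 1) * cnj (y 1) - (\<Sum>m\<in>{1..N}. of_real b^m * (y m - y (Suc m)) * (cnj (y m) - cnj (y (Suc m))))
        - BN N"
      unfolding BN_def by (rule green)
    have L: "(\<Sum>n<Suc N. of_real b^n * ((y n - y (Suc n)) - of_real b * (y (Suc n) - y (Suc (Suc n)))) * cnj (y (Suc n)))
       = - l * of_real (t N)"
      unfolding rec t_def of_real_sum sum_distrib_left
    proof (rule sum.cong)
      fix n
      have "- l * of_real (p ^ Suc n) * y (Suc n) * cnj (y (Suc n))
          = - l * of_real (p ^ Suc n) * (y (Suc n) * cnj (y (Suc n)))" by (simp only: mult.assoc)
      thus "of_real b ^ n * (- l * of_real (p ^ Suc n) * y (Suc n)) * cnj (y (Suc n)) =
         - l * of_real (b ^ n * p ^ Suc n * (cmod (y (Suc n)))\<^sup>2)"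
        using cnj_sq(1)[of "y (Suc n)"] by (simp add: mult_ac)
    qed simp
    have R1: "(y 0 - y 1) * cnj (y 1) = - of_real ((1 - s) * (cmod (y 1))\<^sup>2)"
      unfolding bc using cnj_sq(1)[of "y (Suc 0)"] by (simp add: algebra_simps)
    have R2: "(\<Sum>m\<in>{1..N}. of_real b^m * (y m - y (Suc m)) * (cnj (y m) - cnj (y (Suc m))))
        = of_real (\<Sum>m\<in>{1..N}. b^m * (cmod (y m - y (Suc m)))\<^sup>2)"
      unfolding of_real_sum
    proof (rule sum.cong)
      fix m
      show "of_real b^m * (y m - y (Suc m)) * (cnj (y m) - cnj (y (Suc m))) =
          complex_of_real (b^m * (cmod (y m - y (Suc m)))\<^sup>2)"
        using cnj_sq(1)[of "y m - y (Suc m)"] by (simp add: mult.assoc)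
    qed simp
    show ?thesis using G unfolding L R1 R2 R_def by (simp add: algebra_simps)
  qed
  have BN0: "BN \<longlonglongrightarrow> 0"
  proof -
    have "(\<lambda>N. of_real b ^ (Suc N)) \<longlonglongrightarrow> (0::complex)"
      using b by (intro LIMSEQ_Suc LIMSEQ_power_zero) auto
    moreover have "(\<lambda>N. y (Suc N) - y (Suc (Suc N))) \<longlonglongrightarrow> c - c"
      by (intro tendsto_diff LIMSEQ_Suc lim)
    moreover have "(\<lambda>N. cnj (y (Suc N))) \<longlonglongrightarrow> cnj c"
      by (intro tendsto_cnj LIMSEQ_Suc lim)
    ultimately have "BN \<longlonglongrightarrow> 0 * (c - c) * cnj c"
      unfolding BN_def by (intro tendsto_mult)
    thus ?thesis by simp
  qed
  obtain n0 t0 where t0: "0 < t0" and tN: "\<And>N. N \<ge> n0 \<Longrightarrow> t0 \<le> t N"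
    using eventually_pos_sum[OF lim c b(1) p] unfolding t_def by blast
  have ImEq: "Im l * t N = Im (BN N)" for N
    using arg_cong[OF key[of N], of Im] by simp
  have ReEq: "Re l * t N = R N + Re (BN N)" for N
    using arg_cong[OF key[of N], of Re] by simp
  have "\<bar>Im l\<bar> * t0 \<le> 0"
  proof (rule LIMSEQ_le_const)
    show "(\<lambda>N. cmod (BN N)) \<longlonglongrightarrow> 0" using tendsto_norm[OF BN0] by simp
    show "\<exists>N. \<forall>n\<ge>N. \<bar>Im l\<bar> * t0 \<le> cmod (BN n)"
    proof (intro exI allI impI)
      fix n assume "n \<ge> n0"
      hence "\<bar>Im l\<bar> * t0 \<le> \<bar>Im l\<bar> * t n" using tN by (intro mult_left_mono) auto
      also have "\<dots> = \<bar>Im (BN n)\<bar>" using ImEq[of n] t0 tN[of n] \<open>n \<ge> n0\<close>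
        by (metis abs_mult abs_of_nonneg less_le_trans less_imp_le)
      also have "\<dots> \<le> cmod (BN n)" by (rule abs_Im_le_cmod)
      finally show "\<bar>Im l\<bar> * t0 \<le> cmod (BN n)" .
    qed
  qed
  hence im: "Im l = 0" using t0 by (simp add: mult_le_0_iff)
  have re: "0 \<le> Re l"
  proof (rule ccontr)
    assume "\<not> 0 \<le> Re l"
    hence neg: "Re l < 0" by simp
    have "0 \<le> Re l * t0"
    proof (rule LIMSEQ_le_const2)
      show "(\<lambda>N. Re (BN N)) \<longlonglongrightarrow> 0" using tendsto_Re[OF BN0] by simp
      show "\<exists>N. \<forall>n\<ge>N. Re (BN n) \<le> Re l * t0"
      proof (intro exI allI impI)
        fix n assume "n \<ge> n0"
        have "Re (BN n) \<le> Re l * t n" using ReEq[of n] R0[of n] by simp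
        also have "\<dots> \<le> Re l * t0" using tN[OF \<open>n \<ge> n0\<close>] neg by (intro mult_left_mono_neg) auto
        finally show "Re (BN n) \<le> Re l * t0" .
      qed
    qed
    thus False using neg t0 by (simp add: mult_less_0_iff zero_le_mult_iff)
  qed
  show ?thesis using im re by simp
qed


lemma simple_abstract:
  fixes u w :: "nat \<Rightarrow> complex" and b p s :: real and l :: complex
  assumes recu: "\<And>n. (u n - u (Suc n)) - of_real b * (u (Suc n) - u (Suc (Suc n)))
                     = - l * of_real (p^(Suc n)) * u (Suc n)"
    and recw: "\<And>n. (w n - w (Suc n)) - of_real b * (w (Suc n) - w (Suc (Suc n)))
                     = - l * of_real (p^(Suc n)) * w (Suc n) - of_real (p^(Suc n)) * u (Suc n)"
    and bc: "u 0 = of_real s * u 1"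
    and real: "\<And>n. u n \<in> \<real>"
    and b: "0 < b" "b < 1" and p: "0 < p"
    and limu: "u \<longlonglongrightarrow> c" and c: "c \<noteq> 0" and limw: "w \<longlonglongrightarrow> d"
  shows "w 0 - of_real s * w 1 \<noteq> 0"
proof
  assume h: "w 0 - of_real s * w 1 = 0"
  define t where "t N = (\<Sum>n<Suc N. b^n * p^(Suc n) * (cmod (u (Suc n)))\<^sup>2)" for N
  define CN where "CN N = of_real b ^ (Suc N) * ((w (Suc N) - w (Suc (Suc N))) * u (Suc N)
         - (u (Suc N) - u (Suc (Suc N))) * w (Suc N))" for N
  have key: "of_real (t N) = CN N" for N
  proof -
    have G1: "(\<Sum>n<Suc N. of_real b^n * ((w n - w (Suc n)) - of_real b * (w (Suc n) - w (Suc (Suc n)))) * u (Suc n))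
      = (w 0 - w 1) * u 1 - (\<Sum>m\<in>{1..N}. of_real b^m * (w m - w (Suc m)) * (u m - u (Suc m)))
        - of_real b ^ (Suc N) * (w (Suc N) - w (Suc (Suc N))) * u (Suc N)"
      by (rule green)
    have G2: "(\<Sum>n<Suc N. of_real b^n * ((u n - u (Suc n)) - of_real b * (u (Suc n) - u (Suc (Suc n)))) * w (Suc n))
      = (u 0 - u 1) * w 1 - (\<Sum>m\<in>{1..N}. of_real b^m * (u m - u (Suc m)) * (w m - w (Suc m)))
        - of_real b ^ (Suc N) * (u (Suc N) - u (Suc (Suc N))) * w (Suc N)"
      by (rule green)
    have sq: "u n * u n = complex_of_real ((cmod (u n))\<^sup>2)" for n
    proof -
      obtain r where "u n = of_real r" using real[of n] by (auto elim: Reals_cases)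
      thus ?thesis by (simp add: power2_eq_square)
    qed
    have "(\<Sum>n<Suc N. of_real b^n * ((w n - w (Suc n)) - of_real b * (w (Suc n) - w (Suc (Suc n)))) * u (Suc n))
        - (\<Sum>n<Suc N. of_real b^n * ((u n - u (Suc n)) - of_real b * (u (Suc n) - u (Suc (Suc n)))) * w (Suc n))
        = (\<Sum>n<Suc N. - (of_real b^n * of_real (p^(Suc n)) * (u (Suc n) * u (Suc n))))"
      unfolding recu recw sum_subtractf[symmetric]
      by (rule sum.cong) (auto simp: algebra_simps)
    also have "\<dots> = - of_real (t N)"
      unfolding t_def sq of_real_sum sum_negf of_real_mult of_real_power by simp
    finally have L: "(\<Sum>n<Suc N. of_real b^n * ((w n - w (Suc n)) - of_real b * (w (Suc n) - w (Suc (Suc n)))) * u (Suc n))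
        - (\<Sum>n<Suc N. of_real b^n * ((u n - u (Suc n)) - of_real b * (u (Suc n) - u (Suc (Suc n)))) * w (Suc n))
        = - of_real (t N)" .
    have M: "(\<Sum>m\<in>{1..N}. of_real b^m * (w m - w (Suc m)) * (u m - u (Suc m)))
           = (\<Sum>m\<in>{1..N}. of_real b^m * (u m - u (Suc m)) * (w m - w (Suc m)))"
      by (rule sum.cong) (auto simp: mult_ac)
    have "(w 0 - w 1) * u 1 - (u 0 - u 1) * w 1 = u 1 * (w 0 - of_real s * w 1)"
      unfolding bc by (simp add: algebra_simps)
    also have "\<dots> = 0" using h by simp
    finally have Z: "(w 0 - w 1) * u 1 - (u 0 - u 1) * w 1 = 0" .
    show ?thesis using L unfolding G1 G2 M CN_def using Z by (simp add: algebra_simps)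
  qed
  have C0: "CN \<longlonglongrightarrow> 0"
  proof -
    have "(\<lambda>N. of_real b ^ (Suc N)) \<longlonglongrightarrow> (0::complex)"
      using b by (intro LIMSEQ_Suc LIMSEQ_power_zero) auto
    moreover have "(\<lambda>N. (w (Suc N) - w (Suc (Suc N))) * u (Suc N)
         - (u (Suc N) - u (Suc (Suc N))) * w (Suc N)) \<longlonglongrightarrow> (d - d) * c - (c - c) * d"
      by (intro tendsto_diff tendsto_mult LIMSEQ_Suc limu limw)
    ultimately have "CN \<longlonglongrightarrow> 0 * ((d - d) * c - (c - c) * d)"
      unfolding CN_def by (intro tendsto_mult)
    thus ?thesis by simp
  qed
  obtain n0 t0 where t0: "0 < t0" and tN: "\<And>N. N \<ge> n0 \<Longrightarrow> t0 \<le> t N"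
    using eventually_pos_sum[OF limu c b(1) p] unfolding t_def by blast
  have "t0 \<le> 0"
  proof (rule LIMSEQ_le_const)
    show "(\<lambda>N. cmod (CN N)) \<longlonglongrightarrow> 0" using tendsto_norm[OF C0] by simp
    show "\<exists>N. \<forall>n\<ge>N. t0 \<le> cmod (CN n)"
    proof (intro exI allI impI)
      fix n assume n: "n \<ge> n0"
      have "cmod (CN n) = \<bar>t n\<bar>" unfolding key[symmetric] by simp
      thus "t0 \<le> cmod (CN n)" using tN[OF n] by simp
    qed
  qed
  thus False using t0 by simp
qed


lemma Ln_neg_real:
  assumes "x \<in> \<real>" "Re x < 0"
  shows "Ln x = Ln (- x) + \<i> * pi"
proof -
  have "Im (-x) = 0" using assms(1) by (simp add: complex_is_Real_iff)
  moreover have "Re (-x) > 0" using assms(2) by simp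
  moreover have "-x \<noteq> 0" using assms(2) by auto
  ultimately show ?thesis using Ln_minus[of "-x"] by simp
qed

lemma cpow_cont_real:
  fixes a :: complex and \<nu> :: complex
  assumes "a \<in> \<real>" "a \<noteq> 0"
  shows "((\<lambda>x. exp (\<nu> * Ln x)) \<longlongrightarrow> exp (\<nu> * Ln a)) (at a within \<real>)"
proof (cases "Re a > 0")
  case True
  have "a \<notin> \<real>\<^sub>\<le>\<^sub>0" using True by (auto simp: nonpos_Reals_def)
  hence "continuous (at a within \<real>) (\<lambda>x. exp (\<nu> * Ln x))"
    by (intro continuous_intros)
  thus ?thesis by (simp add: continuous_within)
next
  case False
  have ar: "Im a = 0" using assms(1) by (simp add: complex_is_Real_iff)
  hence neg: "Re a < 0" using False assms(2) by (metis complex_eq_iff linorder_neqE_linordered_idom zero_complex.simps)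
  have "- a \<notin> \<real>\<^sub>\<le>\<^sub>0"
  proof
    assume "- a \<in> \<real>\<^sub>\<le>\<^sub>0"
    then obtain r where "- a = complex_of_real r" "r \<le> 0" by (auto simp: nonpos_Reals_def)
    hence "Re (- a) \<le> 0" by simp
    thus False using neg by simp
  qed
  hence c1: "isCont (\<lambda>x. Ln (- x)) a"
    by (intro isCont_o2[where f=uminus and g=Ln] continuous_within_Ln) (auto intro: continuous_intros)
  have "isCont (\<lambda>x. exp (\<nu> * (Ln (- x) + \<i> * pi))) a"
    by (intro continuous_intros c1)
  hence "((\<lambda>x. exp (\<nu> * (Ln (- x) + \<i> * pi))) \<longlongrightarrow> exp (\<nu> * (Ln (- a) + \<i> * pi))) (at a within \<real>)"
    by (simp add: isCont_def tendsto_within_subset[OF _ subset_UNIV])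
  hence L: "((\<lambda>x. exp (\<nu> * (Ln (- x) + \<i> * pi))) \<longlongrightarrow> exp (\<nu> * Ln a)) (at a within \<real>)"
    using Ln_neg_real[OF assms(1) neg] by simp
  show ?thesis
  proof (rule Lim_transform_within[OF L, of "- Re a"])
    show "0 < - Re a" using neg by simp
    fix x assume x: "x \<in> \<real>" "0 < dist x a" "dist x a < - Re a"
    have "Re x < 0"
    proof -
      have "\<bar>Re x - Re a\<bar> \<le> dist x a" using abs_Re_le_cmod[of "x - a"] by (simp add: dist_norm)
      thus ?thesis using x(3) by linarith
    qed
    thus "exp (\<nu> * (Ln (- x) + \<i> * pi)) = exp (\<nu> * Ln x)"
      using Ln_neg_real[OF x(1)] by simp
  qed
qed


definition hh :: "real \<Rightarrow> real \<Rightarrow> complex \<Rightarrow> complex" where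
  "hh q \<nu> z = phi q \<nu> z - of_real (q powr \<nu>) * phi q \<nu> (of_real (q^2) * z)"

definition EE :: "real \<Rightarrow> real \<Rightarrow> complex \<Rightarrow> complex" where
  "EE q \<nu> x = exp (of_real \<nu> * Ln x) / (of_real (Pr (q^2) (q^2)) * (1 - of_real q) * x)"

lemma Pp_nz:
  fixes q \<nu> :: real
  assumes "0 < q" "q < 1" "0 < \<nu>"
  shows "Pr (q^2) (q^2) \<noteq> 0"
proof (rule Pr_conv(2))
  note P = params[OF assms]
  show "0 < q^2" "q^2 < 1" using P by auto
  fix i
  have "(q^2) * (q^2)^i < 1" using power_Suc_less_one[OF P(1,2), of i] by simp
  thus "1 - q^2 * (q^2)^i \<noteq> 0" by auto
qed

lemma DqJ_rep:
  assumes "0 < q" "q < 1" "0 < \<nu>"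
  shows "DqJ q (of_real \<nu>) x = EE q \<nu> x * hh q \<nu> (x^2)"
proof (cases "x = 0")
  case True
  then show ?thesis unfolding DqJ_def EE_def by simp
next
  case False
  define A where "A = exp (of_real \<nu> * Ln x)"
  define P0 where "P0 = complex_of_real (Pr (q^2) (q^2))"
  have Lq: "Ln (of_real q * x) = of_real (ln q) + Ln x"
    using Ln_times_of_real[OF assms(1) False] Ln_of_real[OF assms(1)] by simp
  have eA: "exp (of_real \<nu> * Ln (of_real q * x)) = of_real (q powr \<nu>) * A"
    unfolding Lq A_def using assms(1)
    by (simp add: distrib_left exp_add powr_def exp_of_real[symmetric] mult.commute)
  have sq: "(of_real q * x)^2 = of_real (q^2) * x^2" by (simp add: power_mult_distrib)
  have "DqJ q (of_real \<nu>) x = (A / P0 * phi q \<nu> (x^2) - of_real (q powr \<nu>) * A / P0 * phi q \<nu> (of_real (q^2) * x^2))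
        / ((1 - of_real q) * x)"
    unfolding DqJ_def HE_J_rep[OF assms(1,2)] eA sq phi_def[symmetric] A_def P0_def by simp
  also have "\<dots> = EE q \<nu> x * hh q \<nu> (x^2)"
  proof -
    have "P0 \<noteq> 0" unfolding P0_def using Pp_nz[OF assms] by simp
    moreover have "1 - complex_of_real q \<noteq> 0" using assms(2)
      by (metis less_irrefl of_real_1 of_real_eq_iff right_minus_eq)
    ultimately show ?thesis
      unfolding EE_def hh_def A_def[symmetric] P0_def[symmetric] using False by (simp add: field_simps)
  qed
  finally show ?thesis .
qed


lemma hh_deriv:
  assumes "0 < q" "q < 1" "0 < \<nu>"
  shows "(hh q \<nu> has_field_derivative
     (dphi q \<nu> z - of_real (q powr \<nu>) * (dphi q \<nu> (of_real (q^2) * z) * of_real (q^2)))) (at z)"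
proof -
  have D1: "((\<lambda>w. phi q \<nu> (of_real (q^2) * w)) has_field_derivative dphi q \<nu> (of_real (q^2) * z) * of_real (q^2)) (at z)"
    by (rule DERIV_chain2[where f="phi q \<nu>" and g="\<lambda>w. of_real (q^2) * w", OF phi_deriv[OF assms] DERIV_cmult_Id])
  show ?thesis unfolding hh_def[abs_def]
    by (intro DERIV_diff DERIV_cmult phi_deriv[OF assms] D1)
qed

theorem proposition3p9:
  fixes q \<nu> :: real and a :: complex
  assumes "0 < q" and "q < 1" and "0 < \<nu>"
    and "a \<noteq> 0" and "DqJ q (of_real \<nu>) a = 0"
  shows "a \<in> \<real> \<and>
         (\<exists>d. d \<noteq> 0 \<and> (DqJ q (of_real \<nu>) has_field_derivative d) (at a within \<real>))"
proof -
  note A3 = assms(1-3)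
  note P = params[OF A3]
  define p where "p = q^2"
  define b where "b = q powr (2*\<nu>)"
  define s where "s = q powr \<nu>"
  define lam where "lam = a^2"
  have p: "0 < p" "p < 1" using P unfolding p_def by auto
  have b: "0 < b" "b < 1" using P unfolding b_def by auto
  have s: "s \<le> 1" using P unfolding s_def by auto
  have K: "complex_of_real (Pr (q^2) (q^2)) * (1 - of_real q) \<noteq> 0"
    using Pp_nz[OF A3] assms(2) by (metis less_irrefl mult_eq_0_iff of_real_1 of_real_eq_0_iff of_real_eq_iff right_minus_eq)
  have Enz: "EE q \<nu> a \<noteq> 0" unfolding EE_def using K assms(4) by simp
  have h0: "hh q \<nu> lam = 0"
    using assms(5) DqJ_rep[OF A3, of a] Enz unfolding lam_def by simp
  have lam0: "lam \<noteq> 0" unfolding lam_def using assms(4) by simp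
  define y where "y n = phi q \<nu> (of_real (p^n) * lam)" for n
  have e1: "complex_of_real (q^2) * (complex_of_real (p^n) * lam) = complex_of_real (p^Suc n) * lam" for n
    unfolding p_def by simp
  have e2: "complex_of_real (q^2) * complex_of_real (q^2) * (complex_of_real (p^n) * lam)
       = complex_of_real (p^Suc (Suc n)) * lam" for n
    unfolding p_def by simp
  have recy: "(y n - y (Suc n)) - of_real b * (y (Suc n) - y (Suc (Suc n)))
              = - lam * of_real (p^(Suc n)) * y (Suc n)" for n
  proof -
    have F: "y n - (1 + of_real b - of_real (p^Suc n) * lam) * y (Suc n) + of_real b * y (Suc (Suc n)) = 0"
      using phi_funeq[OF A3, of "of_real (p^n) * lam"] unfolding e1 e2 y_def b_def .
    have "((y n - y (Suc n)) - of_real b * (y (Suc n) - y (Suc (Suc n))))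
              - (- lam * of_real (p^(Suc n)) * y (Suc n))
          = y n - (1 + of_real b - of_real (p^Suc n) * lam) * y (Suc n) + of_real b * y (Suc (Suc n))"
      by (simp add: algebra_simps)
    from this[unfolded F] show ?thesis by (simp only: right_minus_eq)
  qed
  have bc: "y 0 = of_real s * y 1"
    using h0 unfolding hh_def y_def s_def p_def by simp
  have pn0: "(\<lambda>n. complex_of_real (p^n)) \<longlonglongrightarrow> 0"
    using p by (auto intro!: tendsto_of_real_iff[THEN iffD2] LIMSEQ_power_zero simp: tendsto_of_real_iff)
  have arg0: "(\<lambda>n. complex_of_real (p^n) * lam) \<longlonglongrightarrow> 0"
    using tendsto_mult[OF pn0 tendsto_const[of lam]] by simp
  have limy: "y \<longlonglongrightarrow> phi q \<nu> 0"
    unfolding y_def by (rule isCont_tendsto_compose[OF phi_cont[OF A3] arg0])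
  have RL: "Im lam = 0 \<and> 0 \<le> Re lam"
    by (rule reality_abstract[OF recy bc b(1,2) p(1) s limy phi_0[OF A3]])
  have areal: "a \<in> \<real>"
  proof -
    have "Im lam = 2 * Re a * Im a" "Re lam = (Re a)^2 - (Im a)^2"
      unfolding lam_def by (simp_all add: power2_eq_square)
    moreover have "Re lam \<noteq> 0 \<or> Im lam \<noteq> 0" using lam0 complex_eq_iff by auto
    ultimately have "Im a = 0" using RL
      by (metis diff_0 mult_eq_0_iff neg_0_le_iff_le not_numeral_le_zero power2_eq_square
          zero_le_power2 zero_neq_numeral antisym)
    thus ?thesis by (simp add: complex_is_Real_iff)
  qed
  have lamR: "lam = of_real (Re lam)" using RL by (simp add: complex_eq_iff)
  define w where "w n = of_real (p^n) * dphi q \<nu> (of_real (p^n) * lam)" for n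
  have recw: "(w n - w (Suc n)) - of_real b * (w (Suc n) - w (Suc (Suc n)))
              = - lam * of_real (p^(Suc n)) * w (Suc n) - of_real (p^(Suc n)) * y (Suc n)" for n
  proof -
    have F: "dphi q \<nu> (of_real (p^n) * lam)
          - (1 + of_real b - of_real (p^Suc n) * lam) * of_real (q^2) * dphi q \<nu> (of_real (p^Suc n) * lam)
          + of_real (q^2) * y (Suc n)
          + of_real b * (of_real (q^2) * of_real (q^2)) * dphi q \<nu> (of_real (p^Suc (Suc n)) * lam) = 0"
      using dphi_funeq[OF A3, of "of_real (p^n) * lam"] unfolding e1 e2 y_def b_def .
    have pn1: "complex_of_real (p^Suc n) = complex_of_real (p^n) * complex_of_real (q^2)"
      unfolding p_def by simp
    have pn2: "complex_of_real (p^Suc (Suc n)) = complex_of_real (p^n) * complex_of_real (q^2) * complex_of_real (q^2)"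
      unfolding p_def by simp
    have "((w n - w (Suc n)) - of_real b * (w (Suc n) - w (Suc (Suc n))))
            - (- lam * of_real (p^(Suc n)) * w (Suc n) - of_real (p^(Suc n)) * y (Suc n))
          = of_real (p^n) * (dphi q \<nu> (of_real (p^n) * lam)
          - (1 + of_real b - of_real (p^Suc n) * lam) * of_real (q^2) * dphi q \<nu> (of_real (p^Suc n) * lam)
          + of_real (q^2) * y (Suc n)
          + of_real b * (of_real (q^2) * of_real (q^2)) * dphi q \<nu> (of_real (p^Suc (Suc n)) * lam))"
      unfolding w_def
      apply (simp only: pn1 pn2[symmetric])
      apply (simp only: pn2 pn1)
      by (simp add: algebra_simps)
    from this[unfolded F] show ?thesis by (simp only: mult_zero_right right_minus_eq)
  qed
  have ureal: "y n \<in> \<real>" for n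
  proof -
    have "complex_of_real (p^n) * lam = complex_of_real (p^n * Re lam)"
      using lamR by (metis of_real_mult)
    hence "y n = complex_of_real (\<Sum>k. cr q \<nu> k * (p^n * Re lam)^k)"
      unfolding y_def by (simp only: phi_real[OF A3])
    thus ?thesis by (simp only: Reals_of_real)
  qed
  have limw: "w \<longlonglongrightarrow> 0 * dphi q \<nu> 0"
    unfolding w_def
    by (intro tendsto_mult pn0 isCont_tendsto_compose[OF dphi_cont[OF A3] arg0])
  have dnz: "w 0 - of_real s * w 1 \<noteq> 0"
    by (rule simple_abstract[OF recy recw bc ureal b(1,2) p(1) limy phi_0[OF A3] limw])
  define dh where "dh = dphi q \<nu> lam - of_real (q powr \<nu>) * (dphi q \<nu> (of_real (q^2) * lam) * of_real (q^2))"
  have dh0: "dh \<noteq> 0" using dnz unfolding w_def dh_def s_def p_def by (simp add: mult_ac)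
  have Dh: "(hh q \<nu> has_field_derivative dh) (at lam)"
    unfolding dh_def by (rule hh_deriv[OF A3])
  have Dsq: "((\<lambda>x. x^2) has_field_derivative 2 * a) (at a within \<real>)"
    by (auto intro!: derivative_eq_intros)
  have Dhs: "((\<lambda>x. hh q \<nu> (x^2)) has_field_derivative dh * (2 * a)) (at a within \<real>)"
    by (rule DERIV_chain2[where f="hh q \<nu>" and g="\<lambda>x. x^2", OF Dh[unfolded lam_def] Dsq])
  have Q: "((\<lambda>x. (hh q \<nu> (x^2) - hh q \<nu> (a^2)) / (x - a)) \<longlongrightarrow> dh * (2 * a)) (at a within \<real>)"
    using Dhs by (simp only: has_field_derivative_iff)
  have EL: "(EE q \<nu> \<longlongrightarrow> EE q \<nu> a) (at a within \<real>)"
    unfolding EE_def[abs_def]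
    by (intro tendsto_divide cpow_cont_real[OF areal assms(4)] tendsto_mult tendsto_const tendsto_ident_at)
       (use K assms(4) in simp)
  have DqJ_eq: "DqJ q (of_real \<nu>) = (\<lambda>x. EE q \<nu> x * hh q \<nu> (x^2))"
    by (rule ext) (rule DqJ_rep[OF A3])
  have "(DqJ q (of_real \<nu>) has_field_derivative EE q \<nu> a * (dh * (2 * a))) (at a within \<real>)"
  proof -
    have "(\<lambda>x. (EE q \<nu> x * hh q \<nu> (x^2) - EE q \<nu> a * hh q \<nu> (a^2)) / (x - a))
        = (\<lambda>x. EE q \<nu> x * ((hh q \<nu> (x^2) - hh q \<nu> (a^2)) / (x - a)))"
      using h0 unfolding lam_def by (simp add: field_simps)
    moreover have "((\<lambda>x. EE q \<nu> x * ((hh q \<nu> (x^2) - hh q \<nu> (a^2)) / (x - a))) \<longlongrightarrow> EE q \<nu> a * (dh * (2 * a))) (at a within \<real>)"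
      by (intro tendsto_mult EL Q)
    ultimately show ?thesis unfolding DqJ_eq has_field_derivative_iff by simp
  qed
  moreover have "EE q \<nu> a * (dh * (2 * a)) \<noteq> 0" using Enz dh0 assms(4) by simp
  ultimately show ?thesis using areal by blast
qed

end
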